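(* Let $1\le m\le n$ in type $B$ and $1\le m\le n-1$ in types $C$ and $D$, and let $\psi_m$ be the map sending $t_{ij}(u)$ ($m+1\le i,j\le(m+1)'$) to the quasideterminant of the submatrix of $T(u)$ with rows $1,\dots,m,i$ and columns $1,\dots,m,j$, with the $(i,j)$ entry $t_{ij}(u)$ boxed. Then in $\mathrm X(\mathfrak g_N)$ $$[\,t_{ab}(u),\psi_m(t_{ij}(v))\,]=0\qquad\text{for all }1\le a,b\le m,\ m+1\le i,j\le (m+1)'.$$
   Context: Let $n\ge 1$ and let $\mathfrak g_N$ be one of: $\mathfrak o_N$ with $N=2n+1$ (type $B_n$), $\mathfrak{sp}_N$ with $N=2n$ (type $C_n$), or $\mathfrak o_N$ with $N=2n$ (type $D_n$). For $1\le i\le N$ set $i'=N-i+1$. In the symplectic case put $\varepsilon_i=1$ for $1\le i\le n$ and $\varepsilon_i=-1$ for $n+1\le i\le 2n$. Set $\theta_{ij}=1$ in the orthogonal case and $\theta_{ij}=\varepsilon_i\varepsilon_j$ in the symplectic case, and $\kappa=N/2-1$ in the orthogonal case, $\kappa=N/2+1$ in the symplectic case. Let $e_{ij}$ ($1\le i,j\le N$) be the matrix units of $\mathrm{End}\,\mathbb C^N$, $P=\sum_{i,j}e_{ij}\otimes e_{ji}$, $Q=\sum_{i,j}\theta_{ij}\,e_{ij}\otimes e_{i'j'}$, and $R(u)=1-\frac{P}{u}+\frac{Q}{u-\kappa}$. For $C\in\mathrm{End}\,\mathbb C^N\otimes\mathrm{End}\,\mathbb C^N$ and $1\le a<b\le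 m$, $C_{ab}$ denotes the element of $(\mathrm{End}\,\mathbb C^N)^{\otimes m}$ acting as $C$ on the $a$-th and $b$-th tensor factors and as the identity on the others; for $X=\sum_{i,j} e_{ij}\otimes X_{ij}\in\mathrm{End}\,\mathbb C^N\otimes\mathcal A$, $X_a=\sum_{i,j}1^{\otimes(a-1)}\otimes e_{ij}\otimes 1^{\otimes(m-a)}\otimes X_{ij}$. The extended Yangian $\mathrm X(\mathfrak g_N)$ is the unital associative $\mathbb C$-algebra with generators $t_{ij}^{(r)}$ ($1\le i,j\le N$, $r\ge1$) subject to $R_{12}(u-v)T_1(u)T_2(v)=T_2(v)T_1(u)R_{12}(u-v)$, where $t_{ij}(u)=\delta_{ij}+\sum_{r\ge1}t_{ij}^{(r)}u^{-r}$ and $T(u)=\sum_{i,j}e_{ij}\otimes t_{ij}(u)$ (the relation is read after multiplying both sides by $u-v$ and $u-v-\kappa$, as an identity of formal series). Quasideterminants: for a square matrix $A=[a_{ij}]$ over a ring such that the matrix $A^{ij}$ obtained by deleting row $i$ and column $j$ is invertible, $|A|_{ij}=a_{ij}-r_i^{j}(A^{ij})^{-1}c_j^{i}$, where $r_i^j$ is the $i$-th row of $A$ with $a_{ij}$ removed and $c_j^i$ is the $j$-th column with $a_{ij}$ removed; it is denoted by writing the matrix with the entry $a_{ij}$ boxed. *)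

theory Defs
  imports Complex_Main "HOL-Computational_Algebra.Formal_Power_Series"
begin

class complex_algebra_1 = ring_1 +
  fixes scaleC :: "complex \<Rightarrow> 'a \<Rightarrow> 'a" (infixr "*\<^sub>C" 75)
  assumes scaleC_add_right: "c *\<^sub>C (x + y) = c *\<^sub>C x + c *\<^sub>C y"
    and scaleC_add_left: "(c + d) *\<^sub>C x = c *\<^sub>C x + d *\<^sub>C x"
    and scaleC_scaleC: "c *\<^sub>C (d *\<^sub>C x) = (c * d) *\<^sub>C x"
    and scaleC_one: "1 *\<^sub>C x = x"
    and mult_scaleC_left: "(c *\<^sub>C x) * y = c *\<^sub>C (x * y)"
    and mult_scaleC_right: "x * (c *\<^sub>C y) = c *\<^sub>C (x * y)"

datatype cartan_type = TypeB | TypeC | TypeD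

definition dimN :: "cartan_type \<Rightarrow> nat \<Rightarrow> nat" where
  "dimN X n = (if X = TypeB then 2 * n + 1 else 2 * n)"

definition orthogonal :: "cartan_type \<Rightarrow> bool" where
  "orthogonal X \<longleftrightarrow> X \<noteq> TypeC"

definition primed :: "cartan_type \<Rightarrow> nat \<Rightarrow> nat \<Rightarrow> nat" where
  "primed X n i = dimN X n + 1 - i"

definition epsilon :: "nat \<Rightarrow> nat \<Rightarrow> complex" where
  "epsilon n i = (if i \<le> n then 1 else -1)"

definition theta :: "cartan_type \<Rightarrow> nat \<Rightarrow> nat \<Rightarrow> nat \<Rightarrow> complex" where
  "theta X n i j = (if orthogonal X then 1 else epsilon n i * epsilon n j)"

definition kappa :: "cartan_type \<Rightarrow> nat \<Rightarrow> complex" where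
  "kappa X n = (if orthogonal X then of_nat (dimN X n) / 2 - 1 else of_nat (dimN X n) / 2 + 1)"

text \<open>Generators: tt i j r = t_ij^(r) for r \<ge> 1 (the value at r = 0 is ignored).
  tcoef tt i j r is the coefficient of u^(-r) in t_ij(u), with t_ij^(0) = delta_ij.\<close>
definition tcoef :: "(nat \<Rightarrow> nat \<Rightarrow> nat \<Rightarrow> 'a::ring_1) \<Rightarrow> nat \<Rightarrow> nat \<Rightarrow> nat \<Rightarrow> 'a" where
  "tcoef tt i j r = (if r = 0 then (if i = j then 1 else 0) else tt i j r)"

definition tser :: "(nat \<Rightarrow> nat \<Rightarrow> nat \<Rightarrow> 'a::ring_1) \<Rightarrow> nat \<Rightarrow> nat \<Rightarrow> 'a fps" where
  "tser tt i j = Abs_fps (tcoef tt i j)"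

text \<open>Two-variable formal Laurent series: F r s is the coefficient of u^(-r) v^(-s).
  sh a b F is u^a v^b F.\<close>
definition sh :: "int \<Rightarrow> int \<Rightarrow> (int \<Rightarrow> int \<Rightarrow> 'a) \<Rightarrow> int \<Rightarrow> int \<Rightarrow> 'a" where
  "sh a b F = (\<lambda>r s. F (r + a) (s + b))"

text \<open>Multiplication by (u-v)(u-v-kappa), by -(u-v-kappa), and by (u-v).\<close>
definition opA :: "complex \<Rightarrow> (int \<Rightarrow> int \<Rightarrow> 'a::complex_algebra_1) \<Rightarrow> int \<Rightarrow> int \<Rightarrow> 'a" where
  "opA k F = (\<lambda>r s. sh 2 0 F r s - 2 *\<^sub>C sh 1 1 F r s + sh 0 2 F r s
                     - k *\<^sub>C sh 1 0 F r s + k *\<^sub>C sh 0 1 F r s)"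

definition opB :: "complex \<Rightarrow> (int \<Rightarrow> int \<Rightarrow> 'a::complex_algebra_1) \<Rightarrow> int \<Rightarrow> int \<Rightarrow> 'a" where
  "opB k F = (\<lambda>r s. - sh 1 0 F r s + sh 0 1 F r s + k *\<^sub>C F r s)"

definition opC :: "(int \<Rightarrow> int \<Rightarrow> 'a::ring_1) \<Rightarrow> int \<Rightarrow> int \<Rightarrow> 'a" where
  "opC F = (\<lambda>r s. sh 1 0 F r s - sh 0 1 F r s)"

text \<open>Entries of T_1(u) T_2(v): XL tt i k j l is the coefficient of e_ij (x) e_kl,
  i.e. t_ij(u) t_kl(v); entries of T_2(v) T_1(u): XR tt i k j l = t_kl(v) t_ij(u).\<close>
definition XL :: "(nat \<Rightarrow> nat \<Rightarrow> nat \<Rightarrow> 'a::ring_1) \<Rightarrow> nat \<Rightarrow> nat \<Rightarrow> nat \<Rightarrow> nat \<Rightarrow> int \<Rightarrow> int \<Rightarrow> 'a" where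
  "XL tt i k j l = (\<lambda>r s. if 0 \<le> r \<and> 0 \<le> s then tcoef tt i j (nat r) * tcoef tt k l (nat s) else 0)"

definition XR :: "(nat \<Rightarrow> nat \<Rightarrow> nat \<Rightarrow> 'a::ring_1) \<Rightarrow> nat \<Rightarrow> nat \<Rightarrow> nat \<Rightarrow> nat \<Rightarrow> int \<Rightarrow> int \<Rightarrow> 'a" where
  "XR tt i k j l = (\<lambda>r s. if 0 \<le> r \<and> 0 \<le> s then tcoef tt k l (nat s) * tcoef tt i j (nat r) else 0)"

text \<open>The RTT relation  (u-v)(u-v-kappa) R_12(u-v) T_1(u) T_2(v) = T_2(v) T_1(u) (u-v)(u-v-kappa) R_12(u-v),
  with (u-v)(u-v-kappa) R(u-v) = (u-v)(u-v-kappa) - (u-v-kappa) P + (u-v) Q, written entrywise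
  (entry at row (i,k), column (j,l) of End C^N (x) End C^N) and coefficientwise.\<close>
definition RTT :: "cartan_type \<Rightarrow> nat \<Rightarrow> (nat \<Rightarrow> nat \<Rightarrow> nat \<Rightarrow> 'a::complex_algebra_1) \<Rightarrow> bool" where
  "RTT X n tt \<longleftrightarrow>
    (\<forall>i\<in>{1..dimN X n}. \<forall>k\<in>{1..dimN X n}. \<forall>j\<in>{1..dimN X n}. \<forall>l\<in>{1..dimN X n}. \<forall>r s.
       opA (kappa X n) (XL tt i k j l) r s
       + opB (kappa X n) (XL tt k i j l) r s
       + (if k = primed X n i then
            opC (\<lambda>r' s'. \<Sum>p\<in>{1..dimN X n}. theta X n i p *\<^sub>C XL tt p (primed X n p) j l r' s') r s
          else 0)
     = opA (kappa X n) (XR tt i k j l) r s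
       + opB (kappa X n) (XR tt i k l j) r s
       + (if l = primed X n j then
            opC (\<lambda>r' s'. \<Sum>p\<in>{1..dimN X n}. theta X n p j *\<^sub>C XR tt i k p (primed X n p) r' s') r s
          else 0))"

text \<open>For a k x k matrix A (indices 1..k) over a ring, B is an inverse of the submatrix A^{pq}
  (rows {1..k}-{p}, columns {1..k}-{q}); B is indexed by columns x rows and is zero elsewhere.\<close>
definition is_inv_minor :: "nat \<Rightarrow> (nat \<Rightarrow> nat \<Rightarrow> 'b::ring_1) \<Rightarrow> nat \<Rightarrow> nat \<Rightarrow> (nat \<Rightarrow> nat \<Rightarrow> 'b) \<Rightarrow> bool" where
  "is_inv_minor k A p q B \<longleftrightarrow>
     (\<forall>a b. \<not> (a \<in> {1..k} - {q} \<and> b \<in> {1..k} - {p}) \<longrightarrow> B a b = 0) \<and>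
     (\<forall>a\<in>{1..k} - {p}. \<forall>b\<in>{1..k} - {p}.
        (\<Sum>c\<in>{1..k} - {q}. A a c * B c b) = (if a = b then 1 else 0)) \<and>
     (\<forall>a\<in>{1..k} - {q}. \<forall>b\<in>{1..k} - {q}.
        (\<Sum>c\<in>{1..k} - {p}. B a c * A c b) = (if a = b then 1 else 0))"

definition quasidet :: "nat \<Rightarrow> (nat \<Rightarrow> nat \<Rightarrow> 'b::ring_1) \<Rightarrow> nat \<Rightarrow> nat \<Rightarrow> 'b" where
  "quasidet k A p q =
     A p q - (\<Sum>a\<in>{1..k} - {q}. \<Sum>b\<in>{1..k} - {p}.
                A p a * (THE B. is_inv_minor k A p q B) a b * A b q)"

definition psi :: "(nat \<Rightarrow> nat \<Rightarrow> nat \<Rightarrow> 'a::ring_1) \<Rightarrow> nat \<Rightarrow> nat \<Rightarrow> nat \<Rightarrow> 'a fps" where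
  "psi tt m i j = quasidet (m + 1)
      (\<lambda>r c. tser tt (if r \<le> m then r else i) (if c \<le> m then c else j)) (m + 1) (m + 1)"

end

theory Submission
  imports Defs
begin



lemma scaleC_diff_right: "(c::complex) *\<^sub>C ((x::'a::complex_algebra_1) - y) = c *\<^sub>C x - c *\<^sub>C y"
  by (metis add_diff_cancel diff_add_cancel scaleC_add_right)

lemma scaleC_zero_right[simp]: "(c::complex) *\<^sub>C (0::'a::complex_algebra_1) = 0"
  by (metis add_cancel_right_right add_0 scaleC_add_right)

lemma scaleC_two: "(2::complex) *\<^sub>C (x::'a::complex_algebra_1) = x + x"
  by (metis one_add_one scaleC_add_left scaleC_one)

lemma rtt_coef:
  fixes tt :: "nat \<Rightarrow> nat \<Rightarrow> nat \<Rightarrow> 'a::complex_algebra_1"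
  assumes R: "RTT X n tt"
    and ab: "a \<in> {1..dimN X n}" "c \<in> {1..dimN X n}" "b \<in> {1..dimN X n}" "d \<in> {1..dimN X n}"
    and ne: "c \<noteq> primed X n a" "d \<noteq> primed X n b"
  shows "(tcoef tt a b (Suc r) * tcoef tt c d s - tcoef tt c d s * tcoef tt a b (Suc r))
       - (tcoef tt a b r * tcoef tt c d (Suc s) - tcoef tt c d (Suc s) * tcoef tt a b r)
       = tcoef tt c b r * tcoef tt a d s - tcoef tt c b s * tcoef tt a d r"
proof -
  define k where "k = kappa X n"
  define F1 where "F1 = XL tt a c b d"
  define F2 where "F2 = XR tt a c b d"
  define F3 where "F3 = XL tt c a b d"
  define F4 where "F4 = XR tt a c d b"
  define G where "G = (\<lambda>r s. (F1 (r+1) s - F1 r (s+1)) - (F2 (r+1) s - F2 r (s+1)) - F3 r s + F4 r s)"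
  have eq: "opA k F1 r s + opB k F3 r s = opA k F2 r s + opB k F4 r s" for r s
  proof -
    have "\<forall>r s. opA (kappa X n) (XL tt a c b d) r s + opB (kappa X n) (XL tt c a b d) r s
       + (if c = primed X n a then opC (\<lambda>r' s'. \<Sum>p\<in>{1..dimN X n}. theta X n a p *\<^sub>C XL tt p (primed X n p) b d r' s') r s else 0)
     = opA (kappa X n) (XR tt a c b d) r s + opB (kappa X n) (XR tt a c d b) r s
       + (if d = primed X n b then opC (\<lambda>r' s'. \<Sum>p\<in>{1..dimN X n}. theta X n p b *\<^sub>C XR tt a c p (primed X n p) r' s') r s else 0)"
      using R ab unfolding RTT_def by blast
    then show ?thesis using ne unfolding k_def F1_def F2_def F3_def F4_def by simp
  qed
  have rec: "G (r+1) s - G r (s+1) - k *\<^sub>C G r s = 0" for r s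
  proof -
    have "G (r+1) s - G r (s+1) - k *\<^sub>C G r s = (opA k F1 r s + opB k F3 r s) - (opA k F2 r s + opB k F4 r s)"
      unfolding G_def opA_def opB_def sh_def
      by (simp add: scaleC_diff_right scaleC_add_right scaleC_two algebra_simps)
    then show ?thesis using eq[of r s] by simp
  qed
  have neg: "G r s = 0" if "r \<le> -2" for r s
    using that unfolding G_def F1_def F2_def F3_def F4_def XL_def XR_def by auto
  have all: "\<forall>s. G (int t - 2) s = 0" for t
  proof (induction t)
    case 0 then show ?case using neg by simp
  next
    case (Suc t)
    show ?case
    proof
      fix s
      have "G (int t - 2 + 1) s = G (int t - 2) (s+1) + k *\<^sub>C G (int t - 2) s"
        using rec[of "int t - 2" s] by (simp add: algebra_simps)
      then show "G (int (Suc t) - 2) s = 0" using Suc by (simp add: algebra_simps)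
    qed
  qed
  have "G (int r) (int s) = 0" using all[of "r+2"] by simp
  then show ?thesis
    unfolding G_def F1_def F2_def F3_def F4_def XL_def XR_def
    by (simp add: nat_add_distrib algebra_simps)
qed




definition Ecomm :: "'a::ring_1 \<Rightarrow> 'a fps \<Rightarrow> 'a fps" where
  "Ecomm x F = fps_const x * F - F * fps_const x"

lemma tser_nth[simp]: "fps_nth (tser tt i j) s = tcoef tt i j s"
  by (simp add: tser_def)

lemma closed_form:
  fixes tt :: "nat \<Rightarrow> nat \<Rightarrow> nat \<Rightarrow> 'a::ring_1"
  assumes rel: "\<And>r s. (tcoef tt a b (Suc r) * tcoef tt c d s - tcoef tt c d s * tcoef tt a b (Suc r))
       - (tcoef tt a b r * tcoef tt c d (Suc s) - tcoef tt c d (Suc s) * tcoef tt a b r)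
       = tcoef tt c b r * tcoef tt a d s - tcoef tt c b s * tcoef tt a d r"
  shows "fps_X ^ r * Ecomm (tcoef tt a b r) (tser tt c d)
     = (\<Sum>q<r. fps_X ^ (Suc q) * (fps_const (tcoef tt c b q) * tser tt a d - tser tt c b * fps_const (tcoef tt a d q)))"
proof (induction r)
  case 0
  have "Ecomm (tcoef tt a b 0) (tser tt c d) = 0"
    by (simp add: Ecomm_def tcoef_def fps_eq_iff)
  then show ?case by simp
next
  case (Suc r)
  define W where "W = fps_const (tcoef tt c b r) * tser tt a d - tser tt c b * fps_const (tcoef tt a d r)"
  have step: "fps_X * Ecomm (tcoef tt a b (Suc r)) (tser tt c d) = Ecomm (tcoef tt a b r) (tser tt c d) + fps_X * W"
  proof (rule fps_ext)
    fix s
    show "fps_nth (fps_X * Ecomm (tcoef tt a b (Suc r)) (tser tt c d)) s = fps_nth (Ecomm (tcoef tt a b r) (tser tt c d) + fps_X * W) s"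
    proof (cases s)
      case 0 then show ?thesis by (simp add: Ecomm_def tcoef_def)
    next
      case (Suc s')
      then show ?thesis using rel[of r s'] by (simp add: Ecomm_def W_def algebra_simps)
    qed
  qed
  have "fps_X ^ Suc r * Ecomm (tcoef tt a b (Suc r)) (tser tt c d)
      = fps_X ^ r * (fps_X * Ecomm (tcoef tt a b (Suc r)) (tser tt c d))"
    by (simp add: mult.assoc fps_mult_fps_X_power_commute)
  also have "\<dots> = fps_X ^ r * Ecomm (tcoef tt a b r) (tser tt c d) + fps_X ^ Suc r * W"
    by (simp add: step distrib_left mult.assoc fps_mult_fps_X_power_commute)
  finally show ?case using Suc.IH by (simp add: W_def)
qed




lemma qd_deriv:
  fixes A B :: "nat \<Rightarrow> nat \<Rightarrow> 'b::ring_1" and E :: "'b \<Rightarrow> 'b" and Xv Yv :: "nat \<Rightarrow> 'b"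
  assumes add: "\<And>x y. E (x+y) = E x + E y" and mul: "\<And>x y. E (x*y) = E x * y + x * E y"
    and RI: "\<And>x y. x \<in> {1..m} \<Longrightarrow> y \<in> {1..m} \<Longrightarrow> (\<Sum>c\<in>{1..m}. A x c * B c y) = (if x = y then 1 else 0)"
    and LI: "\<And>x y. x \<in> {1..m} \<Longrightarrow> y \<in> {1..m} \<Longrightarrow> (\<Sum>c\<in>{1..m}. B x c * A c y) = (if x = y then 1 else 0)"
    and a: "a \<in> {1..m}" and b: "b \<in> {1..m}"
    and EA: "\<And>c d. c \<in> {1..Suc m} \<Longrightarrow> d \<in> {1..Suc m} \<Longrightarrow> E (A c d) = Xv c * A a d - A c b * Yv d"
  shows "E (A (Suc m) (Suc m) - (\<Sum>e\<in>{1..m}. \<Sum>f\<in>{1..m}. A (Suc m) e * B e f * A f (Suc m))) = 0"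
proof -
  define k where "k = Suc m"
  define I where "I = {1..m}"
  have fI: "finite I" by (simp add: I_def)
  have kI: "k \<in> {1..Suc m}" by (simp add: k_def)
  have Isub: "x \<in> I \<Longrightarrow> x \<in> {1..Suc m}" for x by (auto simp: I_def)
  have E0: "E 0 = 0" using add[of 0 0] by simp
  have Ediff: "E (x - y) = E x - E y" for x y
    using add[of "x - y" y] by (simp add: algebra_simps)
  have Esum: "E (sum g S) = (\<Sum>x\<in>S. E (g x))" for g and S :: "nat set"
  proof (induction S rule: infinite_finite_induct)
    case (infinite A) then show ?case using E0 by simp
  next
    case empty then show ?case using E0 by simp
  next
    case (insert x F) then show ?case by (simp add: add)
  qed
  have ifz: "(if p then 1 else 0) * x = (if p then x else 0)" for p and x :: 'b by simp
  define v where "v f = (\<Sum>e\<in>I. A k e * B e f)" for f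
  have rew: "(\<Sum>e\<in>I. \<Sum>f\<in>I. A k e * B e f * A f k) = (\<Sum>f\<in>I. v f * A f k)"
    unfolding v_def by (subst sum.swap) (simp add: sum_distrib_right)
  have vi: "(\<Sum>f\<in>I. v f * A f h) = A k h" if h: "h \<in> I" for h
  proof -
    have "(\<Sum>f\<in>I. v f * A f h) = (\<Sum>e\<in>I. A k e * (\<Sum>f\<in>I. B e f * A f h))"
      unfolding v_def by (simp add: sum_distrib_right sum_distrib_left mult.assoc) (rule sum.swap)
    also have "\<dots> = (\<Sum>e\<in>I. A k e * (if e = h then 1 else 0))"
      using LI h by (auto simp: I_def intro!: sum.cong)
    also have "\<dots> = A k h" using h fI by (simp add: if_distrib cong: if_cong)
    finally show ?thesis .
  qed
  define Z where "Z = (\<Sum>g\<in>I. v g * Xv g)"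
  have Ev: "(\<Sum>f\<in>I. E (v f) * A f h) = (Xv k - Z) * A a h" if h: "h \<in> I" for h
  proof -
    have "E (A k h) = (\<Sum>f\<in>I. E (v f) * A f h) + (\<Sum>f\<in>I. v f * E (A f h))"
      proof -
        have "E (A k h) = E (\<Sum>f\<in>I. v f * A f h)" using vi[OF h] by simp
        then show ?thesis by (simp add: Esum mul sum.distrib)
      qed
    moreover have "(\<Sum>f\<in>I. v f * E (A f h)) = Z * A a h - A k b * Yv h"
    proof -
      have "(\<Sum>f\<in>I. v f * E (A f h)) = (\<Sum>f\<in>I. v f * Xv f * A a h - v f * A f b * Yv h)"
        apply (rule sum.cong[OF refl]) using EA Isub h by (simp add: right_diff_distrib mult.assoc)
      also have "\<dots> = Z * A a h - (\<Sum>f\<in>I. v f * A f b) * Yv h"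
        by (simp add: Z_def sum_subtractf sum_distrib_right)
      also have "\<dots> = Z * A a h - A k b * Yv h"
        using vi[of b] b by (simp add: I_def)
      finally show ?thesis .
    qed
    moreover have "E (A k h) = Xv k * A a h - A k b * Yv h" using EA kI Isub h by simp
    ultimately have "(\<Sum>f\<in>I. E (v f) * A f h) = Xv k * A a h - A k b * Yv h - (Z * A a h - A k b * Yv h)"
      by (simp add: eq_diff_eq)
    then show ?thesis by (simp add: left_diff_distrib)
  qed
  have Evg: "E (v g) = (Xv k - Z) * (if a = g then 1 else 0)" if g: "g \<in> I" for g
  proof -
    have "E (v g) = (\<Sum>f\<in>I. E (v f) * (if f = g then 1 else 0))"
      using g fI by (simp add: if_distrib cong: if_cong)
    also have "\<dots> = (\<Sum>f\<in>I. E (v f) * (\<Sum>h\<in>I. A f h * B h g))"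
      using RI g by (auto simp: I_def intro!: sum.cong)
    also have "\<dots> = (\<Sum>h\<in>I. (\<Sum>f\<in>I. E (v f) * A f h) * B h g)"
      by (simp add: sum_distrib_right sum_distrib_left mult.assoc) (rule sum.swap)
    also have "\<dots> = (\<Sum>h\<in>I. (Xv k - Z) * (A a h * B h g))"
      using Ev by (simp add: mult.assoc)
    also have "\<dots> = (Xv k - Z) * (if a = g then 1 else 0)"
      using RI a g by (simp add: sum_distrib_left[symmetric] I_def)
    finally show ?thesis .
  qed
  have T1: "(\<Sum>f\<in>I. E (v f) * A f k) = (Xv k - Z) * A a k"
  proof -
    have "(\<Sum>f\<in>I. E (v f) * A f k) = (\<Sum>f\<in>I. (Xv k - Z) * ((if a = f then 1 else 0) * A f k))"
      using Evg by (simp add: mult.assoc)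
    also have "\<dots> = (Xv k - Z) * A a k"
      using a fI by (simp add: I_def sum_distrib_left[symmetric] ifz)
    finally show ?thesis .
  qed
  have T2: "(\<Sum>f\<in>I. v f * E (A f k)) = Z * A a k - A k b * Yv k"
  proof -
    have "(\<Sum>f\<in>I. v f * E (A f k)) = (\<Sum>f\<in>I. v f * Xv f * A a k - v f * A f b * Yv k)"
      apply (rule sum.cong[OF refl]) using EA Isub kI by (simp add: right_diff_distrib mult.assoc)
    also have "\<dots> = Z * A a k - (\<Sum>f\<in>I. v f * A f b) * Yv k"
      by (simp add: Z_def sum_subtractf sum_distrib_right)
    also have "\<dots> = Z * A a k - A k b * Yv k"
      using vi[of b] b by (simp add: I_def)
    finally show ?thesis .
  qed
  have "E (A k k - (\<Sum>f\<in>I. v f * A f k)) = E (A k k) - ((\<Sum>f\<in>I. E (v f) * A f k) + (\<Sum>f\<in>I. v f * E (A f k)))"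
    by (simp add: Ediff Esum mul sum.distrib)
  also have "\<dots> = 0" using T1 T2 EA kI by (simp add: left_diff_distrib)
  finally show ?thesis using rew by (simp add: k_def I_def)
qed




lemma sum_assoc3:
  fixes P :: "nat \<Rightarrow> 'b::ring_1"
  shows "(\<Sum>c\<in>I. P c * (\<Sum>e\<in>J. Q c e * R e)) = (\<Sum>e\<in>J. (\<Sum>c\<in>I. P c * Q c e) * R e)"
  by (simp add: sum_distrib_left sum_distrib_right mult.assoc) (rule sum.swap)

lemma sum_delta_r:
  fixes P :: "nat \<Rightarrow> 'b::ring_1"
  assumes "finite I" "y \<in> I"
  shows "(\<Sum>c\<in>I. P c * (if c = y then 1 else 0)) = P y"
proof -
  have "(\<Sum>c\<in>I. P c * (if c = y then 1 else 0)) = (\<Sum>c\<in>I. if c = y then P c else 0)"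
    by (rule sum.cong) auto
  then show ?thesis using assms by simp
qed

lemma inv_minor_unique:
  assumes "is_inv_minor (Suc m) A (Suc m) (Suc m) B1" "is_inv_minor (Suc m) A (Suc m) (Suc m) B2"
  shows "B1 = B2"
proof (intro ext)
  fix x y
  have I: "{1..Suc m} - {Suc m} = {1..m}" by auto
  note h1 = assms(1)[unfolded is_inv_minor_def I]
  note h2 = assms(2)[unfolded is_inv_minor_def I]
  show "B1 x y = B2 x y"
  proof (cases "x \<in> {1..m} \<and> y \<in> {1..m}")
    case True
    have "B1 x y = (\<Sum>c\<in>{1..m}. B1 x c * (if c = y then 1 else 0))"
      using True by (simp add: sum_delta_r)
    also have "\<dots> = (\<Sum>c\<in>{1..m}. B1 x c * (\<Sum>e\<in>{1..m}. A c e * B2 e y))"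
      using h2 True by (intro sum.cong) auto
    also have "\<dots> = (\<Sum>e\<in>{1..m}. (\<Sum>c\<in>{1..m}. B1 x c * A c e) * B2 e y)"
      by (rule sum_assoc3)
    also have "\<dots> = (\<Sum>e\<in>{1..m}. (if x = e then 1 else 0) * B2 e y)"
      using h1 True by (intro sum.cong) auto
    also have "\<dots> = B2 x y" using True
      by (simp add: if_distrib[of "\<lambda>z. z * _"] cong: if_cong)
    finally show ?thesis .
  next
    case False
    then show ?thesis using h1 h2 by auto
  qed
qed

function rc :: "(nat \<Rightarrow> nat \<Rightarrow> 'b::ring_1 fps) \<Rightarrow> nat set \<Rightarrow> nat \<Rightarrow> nat \<Rightarrow> nat \<Rightarrow> 'b" where
  "rc A I t x y = (if t = 0 then (if x = y then 1 else 0)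
     else - (\<Sum>w\<in>I. \<Sum>p\<in>{1..t}. fps_nth (A x w) p * rc A I (t - p) w y))"
  by auto
termination by (relation "measure (\<lambda>(A,I,t,x,y). t)") auto

function lc :: "(nat \<Rightarrow> nat \<Rightarrow> 'b::ring_1 fps) \<Rightarrow> nat set \<Rightarrow> nat \<Rightarrow> nat \<Rightarrow> nat \<Rightarrow> 'b" where
  "lc A I t x y = (if t = 0 then (if x = y then 1 else 0)
     else - (\<Sum>w\<in>I. \<Sum>i\<in>{0..<t}. lc A I i x w * fps_nth (A w y) (t - i)))"
  by auto
termination by (relation "measure (\<lambda>(A,I,t,x,y). t)") auto

declare rc.simps[simp del] lc.simps[simp del]

lemma fps_delta_nth: "fps_nth (if x = y then 1 else 0 :: 'b::ring_1 fps) t = (if x = y \<and> t = 0 then 1 else 0)"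
  by auto

lemma right_inv:
  fixes A :: "nat \<Rightarrow> nat \<Rightarrow> 'b::ring_1 fps"
  assumes fin: "finite I" and A0: "\<And>x y. x \<in> I \<Longrightarrow> y \<in> I \<Longrightarrow> fps_nth (A x y) 0 = (if x = y then 1 else 0)"
    and x: "x \<in> I" and y: "y \<in> I"
  shows "(\<Sum>c\<in>I. A x c * Abs_fps (\<lambda>t. rc A I t c y)) = (if x = y then 1 else 0)"
proof (rule fps_ext)
  fix t
  have "fps_nth (\<Sum>c\<in>I. A x c * Abs_fps (\<lambda>t. rc A I t c y)) t
      = (\<Sum>c\<in>I. \<Sum>i=0..t. fps_nth (A x c) i * rc A I (t - i) c y)"
    by (simp add: fps_sum_nth fps_mult_nth)
  also have "\<dots> = (\<Sum>c\<in>I. fps_nth (A x c) 0 * rc A I t c y + (\<Sum>i\<in>{1..t}. fps_nth (A x c) i * rc A I (t - i) c y))"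
    by (intro sum.cong refl) (simp add: sum.atLeast_Suc_atMost)
  also have "\<dots> = (\<Sum>c\<in>I. (if x = c then 1 else 0) * rc A I t c y) + (\<Sum>c\<in>I. \<Sum>i\<in>{1..t}. fps_nth (A x c) i * rc A I (t - i) c y)"
    using A0 x by (simp add: sum.distrib)
  also have "\<dots> = rc A I t x y + (\<Sum>c\<in>I. \<Sum>i\<in>{1..t}. fps_nth (A x c) i * rc A I (t - i) c y)"
    using fin x by (simp add: if_distrib[of "\<lambda>z. z * _"] cong: if_cong)
  also have "\<dots> = fps_nth (if x = y then 1 else 0 :: 'b fps) t"
  proof (cases "t = 0")
    case True then show ?thesis by (simp add: rc.simps)
  next
    case False then show ?thesis
      by (subst rc.simps) simp
  qed
  finally show "fps_nth (\<Sum>c\<in>I. A x c * Abs_fps (\<lambda>t. rc A I t c y)) t = fps_nth (if x = y then 1 else 0 :: 'b fps) t" .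
qed

lemma left_inv:
  fixes A :: "nat \<Rightarrow> nat \<Rightarrow> 'b::ring_1 fps"
  assumes fin: "finite I" and A0: "\<And>x y. x \<in> I \<Longrightarrow> y \<in> I \<Longrightarrow> fps_nth (A x y) 0 = (if x = y then 1 else 0)"
    and x: "x \<in> I" and y: "y \<in> I"
  shows "(\<Sum>c\<in>I. Abs_fps (\<lambda>t. lc A I t x c) * A c y) = (if x = y then 1 else 0)"
proof (rule fps_ext)
  fix t
  have "fps_nth (\<Sum>c\<in>I. Abs_fps (\<lambda>t. lc A I t x c) * A c y) t
      = (\<Sum>c\<in>I. \<Sum>i=0..t. lc A I i x c * fps_nth (A c y) (t - i))"
    by (simp add: fps_sum_nth fps_mult_nth)
  also have "\<dots> = (\<Sum>c\<in>I. lc A I t x c * fps_nth (A c y) 0 + (\<Sum>i\<in>{0..<t}. lc A I i x c * fps_nth (A c y) (t - i)))"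
    by (intro sum.cong refl) (simp add: atLeast0AtMost atLeast0LessThan lessThan_Suc_atMost[symmetric])
  also have "\<dots> = (\<Sum>c\<in>I. lc A I t x c * (if c = y then 1 else 0)) + (\<Sum>c\<in>I. \<Sum>i\<in>{0..<t}. lc A I i x c * fps_nth (A c y) (t - i))"
    using A0 y by (simp add: sum.distrib)
  also have "\<dots> = lc A I t x y + (\<Sum>c\<in>I. \<Sum>i\<in>{0..<t}. lc A I i x c * fps_nth (A c y) (t - i))"
    using fin y by (simp add: sum_delta_r)
  also have "\<dots> = fps_nth (if x = y then 1 else 0 :: 'b fps) t"
  proof (cases "t = 0")
    case True then show ?thesis by (simp add: lc.simps)
  next
    case False then show ?thesis
      by (subst lc.simps) simp
  qed
  finally show "fps_nth (\<Sum>c\<in>I. Abs_fps (\<lambda>t. lc A I t x c) * A c y) t = fps_nth (if x = y then 1 else 0 :: 'b fps) t" .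
qed




lemma inv_minor_exists:
  fixes A :: "nat \<Rightarrow> nat \<Rightarrow> 'b::ring_1 fps"
  assumes A0: "\<And>x y. x \<in> {1..m} \<Longrightarrow> y \<in> {1..m} \<Longrightarrow> fps_nth (A x y) 0 = (if x = y then 1 else 0)"
  shows "is_inv_minor (Suc m) A (Suc m) (Suc m)
           (\<lambda>x y. if x \<in> {1..m} \<and> y \<in> {1..m} then Abs_fps (\<lambda>t. rc A {1..m} t x y) else 0)"
proof -
  define I where "I = {1..m::nat}"
  have fin: "finite I" by (simp add: I_def)
  have A0': "\<And>x y. x \<in> I \<Longrightarrow> y \<in> I \<Longrightarrow> fps_nth (A x y) 0 = (if x = y then 1 else 0)"
    using A0 by (simp add: I_def)
  define R where "R x y = Abs_fps (\<lambda>t. rc A I t x y)" for x y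
  define L where "L x y = Abs_fps (\<lambda>t. lc A I t x y)" for x y
  have RI: "(\<Sum>c\<in>I. A x c * R c y) = (if x = y then 1 else 0)" if "x \<in> I" "y \<in> I" for x y
    using right_inv[OF fin A0' that] by (simp add: R_def)
  have LI: "(\<Sum>c\<in>I. L x c * A c y) = (if x = y then 1 else 0)" if "x \<in> I" "y \<in> I" for x y
    using left_inv[OF fin A0' that] by (simp add: L_def)
  have LR: "L x y = R x y" if xy: "x \<in> I" "y \<in> I" for x y
  proof -
    have "L x y = (\<Sum>c\<in>I. L x c * (if c = y then 1 else 0))"
      using xy fin by (simp add: sum_delta_r)
    also have "\<dots> = (\<Sum>c\<in>I. L x c * (\<Sum>e\<in>I. A c e * R e y))"
      using RI xy by (intro sum.cong) auto
    also have "\<dots> = (\<Sum>e\<in>I. (\<Sum>c\<in>I. L x c * A c e) * R e y)"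
      by (rule sum_assoc3)
    also have "\<dots> = (\<Sum>e\<in>I. (if x = e then 1 else 0) * R e y)"
      using LI xy by (intro sum.cong) auto
    also have "\<dots> = R x y" using xy fin
      by (simp add: if_distrib[of "\<lambda>z. z * _"] cong: if_cong)
    finally show ?thesis .
  qed
  have I2: "{1..Suc m} - {Suc m} = I" by (auto simp: I_def)
  show ?thesis
    unfolding is_inv_minor_def I2 I_def[symmetric] R_def[symmetric]
  proof (intro conjI ballI allI impI)
    fix a b assume "\<not> (a \<in> I \<and> b \<in> I)" then show "(if a \<in> I \<and> b \<in> I then R a b else 0) = 0" by auto
  next
    fix a b assume ab: "a \<in> I" "b \<in> I"
    have "(\<Sum>c\<in>I. A a c * (if c \<in> I \<and> b \<in> I then R c b else 0)) = (\<Sum>c\<in>I. A a c * R c b)"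
      using ab by (intro sum.cong) auto
    then show "(\<Sum>c\<in>I. A a c * (if c \<in> I \<and> b \<in> I then R c b else 0)) = (if a = b then 1 else 0)"
      using RI ab by simp
  next
    fix a b assume ab: "a \<in> I" "b \<in> I"
    have "(\<Sum>c\<in>I. (if a \<in> I \<and> c \<in> I then R a c else 0) * A c b) = (\<Sum>c\<in>I. L a c * A c b)"
      using ab LR by (intro sum.cong) auto
    then show "(\<Sum>c\<in>I. (if a \<in> I \<and> c \<in> I then R a c else 0) * A c b) = (if a = b then 1 else 0)"
      using LI ab by simp
  qed
qed

theorem corollary3p10:
  fixes X :: cartan_type and n m :: nat
    and tt :: "nat \<Rightarrow> nat \<Rightarrow> nat \<Rightarrow> 'a::complex_algebra_1"
  assumes "1 \<le> n"
    and "1 \<le> m"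
    and "if X = TypeB then m \<le> n else m \<le> n - 1"
    and "RTT X n tt"
    and "a \<in> {1..m}" and "b \<in> {1..m}"
    and "i \<in> {m+1..primed X n (m+1)}" and "j \<in> {m+1..primed X n (m+1)}"
  shows "\<forall>r s. tcoef tt a b r * fps_nth (psi tt m i j) s
             = fps_nth (psi tt m i j) s * tcoef tt a b r"
proof (intro allI)
  fix r s
  note R = assms(4) and a = assms(5) and b = assms(6) and i = assms(7) and j = assms(8)
  define N where "N = dimN X n"
  have pm: "primed X n (m+1) = N - m" by (simp add: primed_def N_def)
  have iN: "m + 1 \<le> i" "i \<le> N - m" and jN: "m + 1 \<le> j" "j \<le> N - m" using i j pm by auto
  define rho where "rho c = (if c \<le> m then c else i)" for c
  define gam where "gam c = (if c \<le> m then c else j)" for c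
  define Am where "Am c d = tser tt (rho c) (gam d)" for c d
  have psi_eq: "psi tt m i j = quasidet (Suc m) Am (Suc m) (Suc m)"
    by (simp add: psi_def Am_def[abs_def] rho_def[abs_def] gam_def[abs_def])
  define B where "B = (\<lambda>x y. if x \<in> {1..m} \<and> y \<in> {1..m} then Abs_fps (\<lambda>t. rc Am {1..m} t x y) else (0::'a fps))"
  have A0: "fps_nth (Am x y) 0 = (if x = y then 1 else 0)" if "x \<in> {1..m}" "y \<in> {1..m}" for x y
    using that by (simp add: Am_def rho_def gam_def tcoef_def)
  have invB: "is_inv_minor (Suc m) Am (Suc m) (Suc m) B"
    unfolding B_def by (rule inv_minor_exists) (rule A0)
  have theB: "(THE B. is_inv_minor (Suc m) Am (Suc m) (Suc m) B) = B"
    using invB inv_minor_unique by blast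
  have I2: "{1..Suc m} - {Suc m} = {1..m}" by auto
  have psi2: "psi tt m i j = Am (Suc m) (Suc m) - (\<Sum>e\<in>{1..m}. \<Sum>f\<in>{1..m}. Am (Suc m) e * B e f * Am f (Suc m))"
    unfolding psi_eq quasidet_def theB I2 by simp
  define E where "E F = fps_X ^ r * Ecomm (tcoef tt a b r) F" for F :: "'a fps"
  have Eadd: "E (x + y) = E x + E y" for x y
    by (simp add: E_def Ecomm_def algebra_simps)
  have Emul: "E (x * y) = E x * y + x * E y" for x y
  proof -
    have "E (x * y) = fps_X ^ r * ((Ecomm (tcoef tt a b r) x) * y + x * Ecomm (tcoef tt a b r) y)"
      by (simp add: E_def Ecomm_def algebra_simps)
    also have "\<dots> = E x * y + x * E y"
      by (simp add: E_def distrib_left mult.assoc) (metis mult.assoc fps_mult_fps_X_power_commute)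
    finally show ?thesis .
  qed
  define Xv where "Xv c = (\<Sum>q<r. fps_X ^ Suc q * fps_const (tcoef tt (rho c) b q))" for c
  define Yv where "Yv d = (\<Sum>q<r. fps_X ^ Suc q * fps_const (tcoef tt a (gam d) q))" for d
  have EA: "E (Am c d) = Xv c * Am a d - Am c b * Yv d" if c: "c \<in> {1..Suc m}" and d: "d \<in> {1..Suc m}" for c d
  proof -
    have rc1: "rho c \<in> {1..N}" "rho c \<le> N - m" using c iN by (auto simp: rho_def)
    have gd1: "gam d \<in> {1..N}" "gam d \<le> N - m" using d jN by (auto simp: gam_def)
    have aN: "a \<in> {1..N}" "b \<in> {1..N}" using a b iN by auto
    have pa: "primed X n a > N - m" "primed X n b > N - m" using a b iN by (auto simp: primed_def N_def)
    have rel: "\<And>r s. (tcoef tt a b (Suc r) * tcoef tt (rho c) (gam d) s - tcoef tt (rho c) (gam d) s * tcoef tt a b (Suc r))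
       - (tcoef tt a b r * tcoef tt (rho c) (gam d) (Suc s) - tcoef tt (rho c) (gam d) (Suc s) * tcoef tt a b r)
       = tcoef tt (rho c) b r * tcoef tt a (gam d) s - tcoef tt (rho c) b s * tcoef tt a (gam d) r"
      by (rule rtt_coef[OF R]) (use rc1 gd1 aN pa in \<open>auto simp: N_def\<close>)
    have cf: "E (tser tt (rho c) (gam d))
     = (\<Sum>q<r. fps_X ^ (Suc q) * (fps_const (tcoef tt (rho c) b q) * tser tt a (gam d) - tser tt (rho c) b * fps_const (tcoef tt a (gam d) q)))"
      unfolding E_def by (rule closed_form[OF rel])
    have "Am a d = tser tt a (gam d)" "Am c b = tser tt (rho c) b"
      using a b by (auto simp: Am_def rho_def gam_def)
    moreover have "(\<Sum>q<r. fps_X ^ (Suc q) * (fps_const (tcoef tt (rho c) b q) * tser tt a (gam d) - tser tt (rho c) b * fps_const (tcoef tt a (gam d) q)))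
        = Xv c * tser tt a (gam d) - tser tt (rho c) b * Yv d"
    proof -
      have "\<And>q. fps_X ^ (Suc q) * (fps_const (tcoef tt (rho c) b q) * tser tt a (gam d) - tser tt (rho c) b * fps_const (tcoef tt a (gam d) q))
         = (fps_X ^ (Suc q) * fps_const (tcoef tt (rho c) b q)) * tser tt a (gam d) - tser tt (rho c) b * (fps_X ^ (Suc q) * fps_const (tcoef tt a (gam d) q))"
        by (simp add: right_diff_distrib mult.assoc del: power_Suc) (metis mult.assoc fps_mult_fps_X_power_commute)
      then show ?thesis
        by (simp add: Xv_def Yv_def sum_subtractf sum_distrib_left sum_distrib_right del: power_Suc)
    qed
    ultimately show ?thesis using cf by (simp add: Am_def)
  qed
  have invB': "\<forall>x\<in>{1..m}. \<forall>y\<in>{1..m}. (\<Sum>c\<in>{1..m}. Am x c * B c y) = (if x = y then 1 else 0)"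
     "\<forall>x\<in>{1..m}. \<forall>y\<in>{1..m}. (\<Sum>c\<in>{1..m}. B x c * Am c y) = (if x = y then 1 else 0)"
    using invB unfolding is_inv_minor_def I2 by blast+
  have "E (psi tt m i j) = 0"
    unfolding psi2 by (rule qd_deriv[where Xv = Xv and Yv = Yv, OF Eadd Emul _ _ a b EA])
      (use invB' in blast)+
  then have "fps_nth (E (psi tt m i j)) (s + r) = 0" by simp
  then show "tcoef tt a b r * fps_nth (psi tt m i j) s = fps_nth (psi tt m i j) s * tcoef tt a b r"
    by (simp add: E_def Ecomm_def fps_X_power_mult_nth)
qed


end
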